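(* Let $\omega\in\Omega$ be a path and $I$ a closed interval with $I\subseteq(0,1)$. If $\omega$ is wCH-random for $I$, then $\omega$ is not recursive. The same conclusion holds if $\omega$ is $\mathscr S$-random for $I$ for some countable set $\mathscr S$ of selection processes containing all recursive temporal selection processes, or if $\omega$ is $R$-random for $I$ for some $R\in\{\mathrm{ML},\mathrm{wML},\mathrm{C},\mathrm{S}\}$.
   Context: Notation: $\mathbb N=\{1,2,\dots\}$, $\mathbb N_0=\mathbb N\cup\{0\}$. $\Omega=\{0,1\}^{\mathbb N}$ is the set of paths $\omega=(\omega_1,\omega_2,\dots)$; $\omega_{1:n}=(\omega_1,\dots,\omega_n)$, $\omega_{1:0}=\square$. $\mathbb S=\bigcup_{n\in\mathbb N_0}\{0,1\}^n$ is the set of situations, $|s|$ the length, $sx$ concatenation. For $r\in[0,1]$, $f:\{0,1\}\to\mathbb R$: $E_r(f)=rf(1)+(1-r)f(0)$; $\overline E_I(f)=\max_{r\in I}E_r(f)$. A forecasting system is a map $\varphi$ from $\mathbb S$ to closed subintervals of $[0,1]$, with $\underline\varphi(s)=\min\varphi(s)$, $\overline\varphi(s)=\max\varphi(s)$; being random for an interval $I$ means being random for the constant forecasting system with value $I$. Computability: a map from a countable effectively encoded domain ($\mathbb N$, $\mathbb N_0$, $\mathbb S$, products with $\{0,1\}$ and $\mathbb N_0$) to $\mathbb N_0$ or $\mathbb Q$ or $\{0,1\}$ is recursive if Turing-computable; a path is recursive if $n\mapsto\omega_n$ is recursive. A real map $r$ is lower semicomputable if $r(d)=\lim_nq(d,n)$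 for a recursive rational $q$ non-decreasing in $n$, computable if $|r(d)-q(d,n)|<2^{-n}$ for a recursive rational $q$. Selection processes: maps $S:\mathbb S\to\{0,1\}$; temporal if $S(s)$ depends only on $|s|$ (written $S(n)$). For a countable set $\mathscr S$ of selection processes, $\omega$ is $\mathscr S$-random for $\varphi$ if for every $S\in\mathscr S$ with $\lim_n\sum_{k=0}^{n-1}S(\omega_{1:k})=\infty$: $\liminf_n\frac{\sum_{k=0}^{n-1}S(\omega_{1:k})[\omega_{k+1}-\underline\varphi(\omega_{1:k})]}{\sum_{k=0}^{n-1}S(\omega_{1:k})}\ge0$ and $\limsup_n\frac{\sum_{k=0}^{n-1}S(\omega_{1:k})[\omega_{k+1}-\overline\varphi(\omega_{1:k})]}{\sum_{k=0}^{n-1}S(\omega_{1:k})}\le0$. $\omega$ is wCH-random for $\varphi$ if it is $\mathscr S$-random for $\varphi$ with $\mathscr S$ the set of all recursive temporal selection processes. Martingale-theoretic randomness: a real process is $F:\mathbb S\to\mathbb R$, $\Delta F(s)$ is $x\mapsto F(sx)-F(s)$; $M$ is a supermartingale for $\varphi$ if $\overline E_{\varphi(s)}(\Delta M(s))\le0$ for all $s$. A test process is a non-negative real process with $F(\square)=1$; a test supermartingale for $\varphi$ is a test process that is a supermartingale for $\varphi$. A multiplier process $D$ assigns to each $s$ a function $D(s):\{0,1\}\to[0,\infty)$ and generates the test process $F(\square)=1$, $F(sx)=F(s)D(s)(x)$. $\mathscr F_{\mathrm{ML}}$: lower semicomputable test processes; $\mathscr F_{\mathrm{wML}}$: test processes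 generated by lower semicomputable multiplier processes; $\mathscr F_{\mathrm C}=\mathscr F_{\mathrm S}$: positive rational-valued recursive test processes. $\overline{\mathbb T}_R(\varphi)$: elements of $\mathscr F_R$ that are test supermartingales for $\varphi$. For $R\in\{\mathrm{ML},\mathrm{wML},\mathrm C\}$, $\omega$ is $R$-random for $\varphi$ if no $T\in\overline{\mathbb T}_R(\varphi)$ has $\limsup_nT(\omega_{1:n})=\infty$. A real growth function is a computable, non-decreasing, unbounded $\tau:\mathbb N_0\to[0,\infty)$; $\omega$ is S-random for $\varphi$ if there are no $T\in\overline{\mathbb T}_{\mathrm S}(\varphi)$ and real growth function $\tau$ with $\limsup_n[T(\omega_{1:n})-\tau(n)]\ge0$. *)

theory Defs
  imports "HOL-Analysis.Analysis" "HOL-Library.Nat_Bijection"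
begin

datatype rf = Zero | Succ | Proj nat | Comp rf "rf list" | Prim rf rf | Mn rf

inductive rf_eval :: "rf \<Rightarrow> nat list \<Rightarrow> nat \<Rightarrow> bool" where
  zero: "rf_eval Zero xs 0"
| succ: "rf_eval Succ (x # xs) (Suc x)"
| proj: "i < length xs \<Longrightarrow> rf_eval (Proj i) xs (xs ! i)"
| comp: "length ys = length gs \<Longrightarrow> (\<forall>i<length gs. rf_eval (gs ! i) xs (ys ! i))
          \<Longrightarrow> rf_eval f ys z \<Longrightarrow> rf_eval (Comp f gs) xs z"
| prim0: "rf_eval g xs z \<Longrightarrow> rf_eval (Prim g h) (0 # xs) z"
| primS: "rf_eval (Prim g h) (n # xs) y \<Longrightarrow> rf_eval h (y # n # xs) z
          \<Longrightarrow> rf_eval (Prim g h) (Suc n # xs) z"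
| mn: "rf_eval f (n # xs) 0 \<Longrightarrow> (\<forall>m<n. \<exists>y. y > 0 \<and> rf_eval f (m # xs) y)
          \<Longrightarrow> rf_eval (Mn f) xs n"

text \<open>A map nat to nat is recursive (Turing-computable) iff it is a total mu-recursive function.\<close>
definition recursive_nat :: "(nat \<Rightarrow> nat) \<Rightarrow> bool" where
  "recursive_nat f \<longleftrightarrow> (\<exists>p. \<forall>n. rf_eval p [n] (f n))"

definition enc_bool :: "bool \<Rightarrow> nat" where "enc_bool b = (if b then 1 else 0)"
definition enc_sit :: "bool list \<Rightarrow> nat" where "enc_sit s = list_encode (map enc_bool s)"
definition enc_rat :: "rat \<Rightarrow> nat" where
  "enc_rat q = prod_encode (int_encode (fst (quotient_of q)), int_encode (snd (quotient_of q)))"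

definition recursive_map :: "('a \<Rightarrow> nat) \<Rightarrow> ('b \<Rightarrow> nat) \<Rightarrow> ('a \<Rightarrow> 'b) \<Rightarrow> bool" where
  "recursive_map encA encB f \<longleftrightarrow> (\<exists>g. recursive_nat g \<and> (\<forall>x. g (encA x) = encB (f x)))"

definition enc_sit_nat :: "bool list \<times> nat \<Rightarrow> nat" where
  "enc_sit_nat p = prod_encode (enc_sit (fst p), snd p)"
definition enc_sit_bool_nat :: "(bool list \<times> bool) \<times> nat \<Rightarrow> nat" where
  "enc_sit_bool_nat p = prod_encode (prod_encode (enc_sit (fst (fst p)), enc_bool (snd (fst p))), snd p)"
definition enc_nat_nat :: "nat \<times> nat \<Rightarrow> nat" where
  "enc_nat_nat p = prod_encode p"

text \<open>A path \<omega> is represented as \<open>nat \<Rightarrow> bool\<close> with \<open>\<omega> k\<close> the (k+1)-th outcome; a situation is a \<open>bool list\<close>.\<close>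
definition prefix :: "(nat \<Rightarrow> bool) \<Rightarrow> nat \<Rightarrow> bool list" where
  "prefix \<omega> n = map \<omega> [0..<n]"

definition recursive_path :: "(nat \<Rightarrow> bool) \<Rightarrow> bool" where
  "recursive_path \<omega> \<longleftrightarrow> recursive_map id enc_bool \<omega>"

definition forecasting_system :: "(bool list \<Rightarrow> real set) \<Rightarrow> bool" where
  "forecasting_system \<phi> \<longleftrightarrow> (\<forall>s. \<exists>l u. 0 \<le> l \<and> l \<le> u \<and> u \<le> 1 \<and> \<phi> s = {l..u})"

definition ev :: "real \<Rightarrow> (bool \<Rightarrow> real) \<Rightarrow> real" where
  "ev r f = r * f True + (1 - r) * f False"

definition upper_ev :: "real set \<Rightarrow> (bool \<Rightarrow> real) \<Rightarrow> real" where
  "upper_ev I f = Sup ((\<lambda>r. ev r f) ` I)"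

definition temporal :: "(bool list \<Rightarrow> bool) \<Rightarrow> bool" where
  "temporal S \<longleftrightarrow> (\<forall>s t. length s = length t \<longrightarrow> S s = S t)"

definition recursive_temporal_sel :: "(bool list \<Rightarrow> bool) set" where
  "recursive_temporal_sel = {S. temporal S \<and> recursive_map enc_sit enc_bool S}"

definition sel_count :: "(bool list \<Rightarrow> bool) \<Rightarrow> (nat \<Rightarrow> bool) \<Rightarrow> nat \<Rightarrow> nat" where
  "sel_count S \<omega> n = (\<Sum>k<n. enc_bool (S (prefix \<omega> k)))"

definition sel_random ::
  "(bool list \<Rightarrow> bool) set \<Rightarrow> (bool list \<Rightarrow> real set) \<Rightarrow> (nat \<Rightarrow> bool) \<Rightarrow> bool" where
  "sel_random SS \<phi> \<omega> \<longleftrightarrow> (\<forall>S\<in>SS. filterlim (sel_count S \<omega>) at_top sequentially \<longrightarrow>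
      (liminf (\<lambda>n. ereal ((\<Sum>k<n. real (enc_bool (S (prefix \<omega> k)))
            * (real (enc_bool (\<omega> k)) - Inf (\<phi> (prefix \<omega> k)))) / real (sel_count S \<omega> n))) \<ge> 0
     \<and> limsup (\<lambda>n. ereal ((\<Sum>k<n. real (enc_bool (S (prefix \<omega> k)))
            * (real (enc_bool (\<omega> k)) - Sup (\<phi> (prefix \<omega> k)))) / real (sel_count S \<omega> n))) \<le> 0))"

definition wCH_random :: "(bool list \<Rightarrow> real set) \<Rightarrow> (nat \<Rightarrow> bool) \<Rightarrow> bool" where
  "wCH_random \<phi> \<omega> \<longleftrightarrow> sel_random recursive_temporal_sel \<phi> \<omega>"

definition supermartingale :: "(bool list \<Rightarrow> real set) \<Rightarrow> (bool list \<Rightarrow> real) \<Rightarrow> bool" where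
  "supermartingale \<phi> M \<longleftrightarrow> (\<forall>s. upper_ev (\<phi> s) (\<lambda>x. M (s @ [x]) - M s) \<le> 0)"

definition test_process :: "(bool list \<Rightarrow> real) \<Rightarrow> bool" where
  "test_process F \<longleftrightarrow> (\<forall>s. F s \<ge> 0) \<and> F [] = 1"

text \<open>Test process generated by a multiplier process: F([])=1, F(sx)=F(s) D(s)(x).\<close>
definition generated :: "(bool list \<Rightarrow> bool \<Rightarrow> real) \<Rightarrow> bool list \<Rightarrow> real" where
  "generated D s = (\<Prod>k<length s. D (take k s) (s ! k))"

definition lower_semicomputable_sit :: "(bool list \<Rightarrow> real) \<Rightarrow> bool" where
  "lower_semicomputable_sit F \<longleftrightarrow> (\<exists>q :: bool list \<Rightarrow> nat \<Rightarrow> rat.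
      recursive_map enc_sit_nat enc_rat (\<lambda>(s, n). q s n) \<and>
      (\<forall>s n. q s n \<le> q s (Suc n)) \<and> (\<forall>s. (\<lambda>n. real_of_rat (q s n)) \<longlonglongrightarrow> F s))"

definition lower_semicomputable_mult :: "(bool list \<Rightarrow> bool \<Rightarrow> real) \<Rightarrow> bool" where
  "lower_semicomputable_mult D \<longleftrightarrow> (\<exists>q :: bool list \<Rightarrow> bool \<Rightarrow> nat \<Rightarrow> rat.
      recursive_map enc_sit_bool_nat enc_rat (\<lambda>((s, x), n). q s x n) \<and>
      (\<forall>s x n. q s x n \<le> q s x (Suc n)) \<and> (\<forall>s x. (\<lambda>n. real_of_rat (q s x n)) \<longlonglongrightarrow> D s x))"

definition F_ML :: "(bool list \<Rightarrow> real) set" where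
  "F_ML = {F. test_process F \<and> lower_semicomputable_sit F}"

definition F_wML :: "(bool list \<Rightarrow> real) set" where
  "F_wML = {F. \<exists>D. (\<forall>s x. D s x \<ge> 0) \<and> lower_semicomputable_mult D \<and> F = generated D}"

definition F_C :: "(bool list \<Rightarrow> real) set" where
  "F_C = {F. test_process F \<and> (\<exists>f :: bool list \<Rightarrow> rat. recursive_map enc_sit enc_rat f \<and>
             (\<forall>s. f s > 0) \<and> (\<forall>s. F s = real_of_rat (f s)))}"

definition F_S :: "(bool list \<Rightarrow> real) set" where
  "F_S = F_C"

definition test_supermartingales :: "(bool list \<Rightarrow> real) set \<Rightarrow> (bool list \<Rightarrow> real set) \<Rightarrow> (bool list \<Rightarrow> real) set" where
  "test_supermartingales FR \<phi> = {T \<in> FR. test_process T \<and> supermartingale \<phi> T}"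

definition mart_random :: "(bool list \<Rightarrow> real) set \<Rightarrow> (bool list \<Rightarrow> real set) \<Rightarrow> (nat \<Rightarrow> bool) \<Rightarrow> bool" where
  "mart_random FR \<phi> \<omega> \<longleftrightarrow>
     \<not> (\<exists>T \<in> test_supermartingales FR \<phi>. limsup (\<lambda>n. ereal (T (prefix \<omega> n))) = \<infinity>)"

definition random_ML where "random_ML = mart_random F_ML"
definition random_wML where "random_wML = mart_random F_wML"
definition random_C where "random_C = mart_random F_C"

definition computable_real_fun :: "(nat \<Rightarrow> real) \<Rightarrow> bool" where
  "computable_real_fun r \<longleftrightarrow> (\<exists>q :: nat \<Rightarrow> nat \<Rightarrow> rat.
      recursive_map enc_nat_nat enc_rat (\<lambda>(d, n). q d n) \<and>
      (\<forall>d n. \<bar>r d - real_of_rat (q d n)\<bar> < 1 / 2 ^ n))"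

definition real_growth_function :: "(nat \<Rightarrow> real) \<Rightarrow> bool" where
  "real_growth_function \<tau> \<longleftrightarrow> computable_real_fun \<tau> \<and> (\<forall>n. \<tau> n \<ge> 0) \<and> mono \<tau> \<and>
      (\<forall>M. \<exists>n. \<tau> n > M)"

definition random_S :: "(bool list \<Rightarrow> real set) \<Rightarrow> (nat \<Rightarrow> bool) \<Rightarrow> bool" where
  "random_S \<phi> \<omega> \<longleftrightarrow> \<not> (\<exists>T \<in> test_supermartingales F_S \<phi>. \<exists>\<tau>. real_growth_function \<tau> \<and>
      limsup (\<lambda>n. ereal (T (prefix \<omega> n) - \<tau> n)) \<ge> 0)"

end

theory Submission
  imports Defs "HOL-Real_Asymp.Real_Asymp"
begin

section \<open>Computability framework\<close>

definition cmp :: "nat \<Rightarrow> (nat list \<Rightarrow> nat) \<Rightarrow> bool" where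
  "cmp k f \<longleftrightarrow> (\<exists>p. \<forall>xs. length xs = k \<longrightarrow> rf_eval p xs (f xs))"

lemma cmp_cong: "cmp k f \<Longrightarrow> (\<And>xs. length xs = k \<Longrightarrow> f xs = g xs) \<Longrightarrow> cmp k g"
  unfolding cmp_def by metis

lemma cmp_zero: "cmp k (\<lambda>_. 0)"
  unfolding cmp_def by (auto intro: rf_eval.zero)

lemma cmp_proj: "i < k \<Longrightarrow> cmp k (\<lambda>xs. xs ! i)"
  unfolding cmp_def by (auto intro: rf_eval.proj)

lemma progs_exist:
  assumes "\<forall>g\<in>set gs. cmp k g"
  shows "\<exists>ps. length ps = length gs \<and> (\<forall>i<length gs. \<forall>xs. length xs = k \<longrightarrow> rf_eval (ps ! i) xs ((gs ! i) xs))"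
  using assms
proof (induction gs)
  case Nil
  then show ?case by simp
next
  case (Cons g gs)
  then obtain ps where ps: "length ps = length gs" "\<forall>i<length gs. \<forall>xs. length xs = k \<longrightarrow> rf_eval (ps ! i) xs ((gs ! i) xs)"
    by auto
  from Cons.prems obtain p where p: "\<forall>xs. length xs = k \<longrightarrow> rf_eval p xs (g xs)" unfolding cmp_def by auto
  show ?case
    apply (rule exI[of _ "p # ps"])
    using ps p by (auto simp: nth_Cons split: nat.splits)
qed

lemma cmp_comp:
  assumes "cmp (length gs) f" "\<forall>g\<in>set gs. cmp k g"
  shows "cmp k (\<lambda>xs. f (map (\<lambda>g. g xs) gs))"
proof -
  obtain pf where pf: "\<forall>ys. length ys = length gs \<longrightarrow> rf_eval pf ys (f ys)" using assms(1) unfolding cmp_def by auto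
  obtain ps where ps: "length ps = length gs" "\<forall>i<length gs. \<forall>xs. length xs = k \<longrightarrow> rf_eval (ps ! i) xs ((gs ! i) xs)"
    using progs_exist[OF assms(2)] by auto
  show ?thesis unfolding cmp_def
    apply (rule exI[of _ "Comp pf ps"])
    apply clarify
    apply (rule rf_eval.comp[where ys = "map (\<lambda>g. g xs) gs" for xs])
    using ps pf by auto
qed

lemma cmp_comp1: "cmp 1 f \<Longrightarrow> cmp k g \<Longrightarrow> cmp k (\<lambda>xs. f [g xs])"
  using cmp_comp[of "[g]" f k] by simp

lemma cmp_comp2: "cmp 2 f \<Longrightarrow> cmp k g \<Longrightarrow> cmp k h \<Longrightarrow> cmp k (\<lambda>xs. f [g xs, h xs])"
  using cmp_comp[of "[g, h]" f k] by (simp add: numeral_2_eq_2)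

lemma cmp_comp3: "cmp 3 f \<Longrightarrow> cmp k g \<Longrightarrow> cmp k h \<Longrightarrow> cmp k u \<Longrightarrow> cmp k (\<lambda>xs. f [g xs, h xs, u xs])"
  using cmp_comp[of "[g, h, u]" f k] by (simp add: numeral_3_eq_3)

lemma map_proj: "length xs = k \<Longrightarrow> map (\<lambda>g. g xs) (map (\<lambda>i ys. ys ! i) [0..<k]) = xs"
  by (auto simp: o_def list_eq_iff_nth_eq)

lemma cmp_cons:
  assumes "cmp (Suc k) f" "cmp k b"
  shows "cmp k (\<lambda>xs. f (b xs # xs))"
proof -
  have "cmp k (\<lambda>xs. f (map (\<lambda>g. g xs) (b # map (\<lambda>i ys. ys ! i) [0..<k])))"
    using assms by (intro cmp_comp) (auto intro: cmp_proj)
  then show ?thesis by (rule cmp_cong) (simp only: list.map map_proj)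
qed

lemma cmp_tl:
  assumes "cmp k f"
  shows "cmp (Suc k) (\<lambda>xs. f (tl xs))"
proof -
  have "cmp (Suc k) (\<lambda>xs. f (map (\<lambda>g. g xs) (map (\<lambda>i ys. ys ! Suc i) [0..<k])))"
    using assms by (intro cmp_comp) (auto intro: cmp_proj)
  then show ?thesis
    by (rule cmp_cong) (auto simp: o_def list_eq_iff_nth_eq nth_tl intro!: arg_cong[where f=f])
qed

lemma cmp_prim:
  assumes "cmp k g" "cmp (Suc (Suc k)) h"
  shows "cmp (Suc k) (\<lambda>xs. rec_nat (g (tl xs)) (\<lambda>n y. h (y # n # tl xs)) (hd xs))"
proof -
  obtain pg where pg: "\<forall>xs. length xs = k \<longrightarrow> rf_eval pg xs (g xs)" using assms(1) unfolding cmp_def by auto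
  obtain ph where ph: "\<forall>xs. length xs = Suc (Suc k) \<longrightarrow> rf_eval ph xs (h xs)" using assms(2) unfolding cmp_def by auto
  have *: "rf_eval (Prim pg ph) (n # xs) (rec_nat (g xs) (\<lambda>n y. h (y # n # xs)) n)" if "length xs = k" for n xs
  proof (induction n)
    case 0
    then show ?case using pg that by (auto intro: rf_eval.prim0)
  next
    case (Suc n)
    then show ?case using ph that by (auto intro: rf_eval.primS)
  qed
  show ?thesis unfolding cmp_def
    apply (rule exI[of _ "Prim pg ph"])
    apply clarify
    subgoal for xs using *[of "tl xs" "hd xs"] by (cases xs) auto
    done
qed

lemma cmp_prim':
  assumes "cmp k g" "cmp (Suc (Suc k)) h"
    and F0: "\<And>xs. length xs = k \<Longrightarrow> F (0 # xs) = g xs"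
    and FS: "\<And>n xs. length xs = k \<Longrightarrow> F (Suc n # xs) = h (F (n # xs) # n # xs)"
  shows "cmp (Suc k) F"
  using cmp_prim[OF assms(1,2)]
proof (rule cmp_cong)
  fix xs :: "nat list" assume "length xs = Suc k"
  then obtain n ys where xs: "xs = n # ys" "length ys = k" by (cases xs) auto
  have "rec_nat (g ys) (\<lambda>n y. h (y # n # ys)) n = F (n # ys)"
    by (induction n) (auto simp: F0 FS xs(2))
  then show "rec_nat (g (tl xs)) (\<lambda>n y. h (y # n # tl xs)) (hd xs) = F xs" using xs by simp
qed

lemma cmp_comp2': "cmp 2 F \<Longrightarrow> cmp k f \<Longrightarrow> cmp k g \<Longrightarrow> (\<And>a b. F [a, b] = G a b) \<Longrightarrow> cmp k (\<lambda>xs. G (f xs) (g xs))"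
  using cmp_comp2[of F k f g] by simp

lemma cmp_comp1': "cmp 1 F \<Longrightarrow> cmp k f \<Longrightarrow> (\<And>a. F [a] = G a) \<Longrightarrow> cmp k (\<lambda>xs. G (f xs))"
  using cmp_comp1[of F k f] by simp

lemma cmp_Suc: assumes "cmp k f" shows "cmp k (\<lambda>xs. Suc (f xs))"
proof -
  have "cmp 1 (\<lambda>xs. Suc (xs ! 0))" unfolding cmp_def
    by (rule exI[of _ Succ]) (auto simp: length_Suc_conv intro: rf_eval.succ)
  then show ?thesis
    by (rule cmp_comp1'[OF _ assms, of _ Suc]) simp
qed

lemma cmp_const: "cmp k (\<lambda>_. c)"
  by (induction c) (auto intro: cmp_zero cmp_Suc)

lemma cmp_add: assumes "cmp k f" "cmp k g" shows "cmp k (\<lambda>xs. f xs + g xs)"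
proof -
  have g: "cmp (Suc 0) (\<lambda>xs. xs ! 0)" by (rule cmp_proj) simp
  have h: "cmp (Suc (Suc (Suc 0))) (\<lambda>xs. Suc (xs ! 0))" by (intro cmp_Suc cmp_proj) simp
  have "cmp (Suc (Suc 0)) (\<lambda>xs. xs ! 0 + xs ! 1)"
    by (rule cmp_prim'[OF g h]) auto
  then have "cmp 2 (\<lambda>xs. xs ! 0 + xs ! 1)" by (simp add: numeral_2_eq_2)
  then show ?thesis
    by (rule cmp_comp2'[OF _ assms, of _ "(+)"]) simp
qed

lemma cmp_mult: assumes "cmp k f" "cmp k g" shows "cmp k (\<lambda>xs. f xs * g xs)"
proof -
  have h: "cmp (Suc (Suc (Suc 0))) (\<lambda>xs. xs ! 0 + xs ! 2)" by (intro cmp_add cmp_proj) auto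
  have "cmp (Suc (Suc 0)) (\<lambda>xs. xs ! 0 * xs ! 1)"
    by (rule cmp_prim'[OF cmp_zero h]) auto
  then have "cmp 2 (\<lambda>xs. xs ! 0 * xs ! 1)" by (simp add: numeral_2_eq_2)
  then show ?thesis
    by (rule cmp_comp2'[OF _ assms, of _ "(*)"]) simp
qed

lemma cmp_iter:
  assumes "cmp 1 (\<lambda>ys. t (ys ! 0))" "cmp k b" "cmp k x"
  shows "cmp k (\<lambda>xs. (t ^^ b xs) (x xs))"
proof -
  have "cmp (Suc k) (\<lambda>xs. (t ^^ hd xs) (x (tl xs)))"
    by (rule cmp_prim'[OF assms(3) cmp_comp1'[OF assms(1) cmp_proj[of 0 "Suc (Suc k)"]]]) (auto simp: funpow_swap1)
  from cmp_cons[OF this assms(2)] show ?thesis by simp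
qed

lemma cmp_sub: assumes "cmp k f" "cmp k g" shows "cmp k (\<lambda>xs. f xs - g xs)"
proof -
  have h: "cmp (Suc (Suc 0)) (\<lambda>ys. ys ! 1)" by (rule cmp_proj) simp
  have p0: "cmp (Suc 0) (\<lambda>ys. ys ! 0 - 1)"
    by (rule cmp_prim'[OF cmp_zero h]) auto
  then have p: "cmp 1 (\<lambda>ys. ys ! 0 - 1)" by simp
  have it: "((\<lambda>z. z - 1) ^^ m) a = a - m" for a m :: nat
    by (induction m) auto
  have "cmp k (\<lambda>xs. ((\<lambda>z. z - 1) ^^ g xs) (f xs))" by (rule cmp_iter[OF p assms(2) assms(1)])
  then show ?thesis by (rule cmp_cong) (simp only: it)
qed

lemma cmp_sum: assumes "cmp (Suc k) g" "cmp k b" shows "cmp k (\<lambda>xs. \<Sum>i<b xs. g (i # xs))"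
proof -
  have h: "cmp (Suc (Suc k)) (\<lambda>ys. ys ! 0 + g (tl ys))"
    by (intro cmp_add cmp_proj cmp_tl assms(1)) simp
  have "cmp (Suc k) (\<lambda>xs. \<Sum>i<hd xs. g (i # tl xs))"
    by (rule cmp_prim'[OF cmp_zero h]) auto
  from cmp_cons[OF this assms(2)] show ?thesis by simp
qed

lemma cmp_if_eq:
  assumes "cmp k f" "cmp k g" "cmp k h1" "cmp k h2"
  shows "cmp k (\<lambda>xs. if f xs = g xs then h1 xs else h2 xs)"
proof -
  have "cmp k (\<lambda>xs. (1 - ((f xs - g xs) + (g xs - f xs))) * h1 xs + (1 - (1 - ((f xs - g xs) + (g xs - f xs)))) * h2 xs)"
    by (intro cmp_add cmp_mult cmp_sub cmp_const assms)
  then show ?thesis by (rule cmp_cong) auto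
qed

lemma cmp_triangle: assumes "cmp k f" shows "cmp k (\<lambda>xs. triangle (f xs))"
proof -
  have h: "cmp (Suc (Suc 0)) (\<lambda>ys. ys ! 0 + Suc (ys ! 1))" by (intro cmp_add cmp_Suc cmp_proj) auto
  have "cmp (Suc 0) (\<lambda>ys. triangle (ys ! 0))"
    by (rule cmp_prim'[OF cmp_zero h]) auto
  then have "cmp 1 (\<lambda>ys. triangle (ys ! 0))" by simp
  then show ?thesis by (rule cmp_comp1'[OF _ assms, of _ triangle]) simp
qed

lemma cmp_pe: assumes "cmp k f" "cmp k g" shows "cmp k (\<lambda>xs. prod_encode (f xs, g xs))"
proof -
  have "cmp k (\<lambda>xs. triangle (f xs + g xs) + f xs)"
    by (intro cmp_add cmp_triangle assms)
  then show ?thesis by (rule cmp_cong) (simp add: prod_encode_def)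
qed

lemma cmp_pow: assumes "cmp k f" shows "cmp k (\<lambda>xs. c ^ f xs)"
proof -
  have t: "cmp 1 (\<lambda>ys. ys ! 0 * c)" by (intro cmp_mult cmp_proj cmp_const) simp
  have it: "((\<lambda>z. z * c) ^^ n) 1 = c ^ n" for n by (induction n) auto
  have "cmp k (\<lambda>xs. ((\<lambda>z. z * c) ^^ f xs) 1)" by (rule cmp_iter[OF t assms cmp_const])
  then show ?thesis by (rule cmp_cong) (simp only: it)
qed

lemma pd_sum_fst: "(\<Sum>x<Suc m. \<Sum>y<Suc m. if prod_encode (x, y) = m then x else 0) = fst (prod_decode m)"
proof -
  obtain a b where ab: "prod_decode m = (a, b)" by (cases "prod_decode m")
  have m: "m = prod_encode (a, b)" using ab by (metis prod_decode_inverse)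
  have eq: "prod_encode (x, y) = m \<longleftrightarrow> x = a \<and> y = b" for x y
    using m by (metis prod_encode_eq prod.inject)
  have la: "a < Suc m" "b < Suc m" using m le_prod_encode_1 le_prod_encode_2 by (auto simp: less_Suc_eq_le)
  have "(\<Sum>x<Suc m. \<Sum>y<Suc m. if prod_encode (x, y) = m then x else 0)
      = (\<Sum>x<Suc m. if x = a then (\<Sum>y<Suc m. if y = b then x else 0) else 0)"
    by (rule sum.cong) (auto simp: eq)
  also have "\<dots> = a" using la by simp
  finally show ?thesis using ab by simp
qed

lemma pd_sum_snd: "(\<Sum>x<Suc m. \<Sum>y<Suc m. if prod_encode (x, y) = m then y else 0) = snd (prod_decode m)"
proof -
  obtain a b where ab: "prod_decode m = (a, b)" by (cases "prod_decode m")
  have m: "m = prod_encode (a, b)" using ab by (metis prod_decode_inverse)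
  have eq: "prod_encode (x, y) = m \<longleftrightarrow> x = a \<and> y = b" for x y
    using m by (metis prod_encode_eq prod.inject)
  have la: "a < Suc m" "b < Suc m" using m le_prod_encode_1 le_prod_encode_2 by (auto simp: less_Suc_eq_le)
  have "(\<Sum>x<Suc m. \<Sum>y<Suc m. if prod_encode (x, y) = m then y else 0)
      = (\<Sum>x<Suc m. if x = a then (\<Sum>y<Suc m. if y = b then y else 0) else 0)"
    by (rule sum.cong) (auto simp: eq)
  also have "\<dots> = b" using la by simp
  finally show ?thesis using ab by simp
qed

lemma cmp_fst_pd: assumes "cmp k f" shows "cmp k (\<lambda>xs. fst (prod_decode (f xs)))"
proof -
  have inner: "cmp (Suc (Suc (Suc 0))) (\<lambda>zs. if prod_encode (zs ! 1, zs ! 0) = zs ! 2 then zs ! 1 else 0)"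
    by (intro cmp_if_eq cmp_pe cmp_proj cmp_const) auto
  have mid: "cmp (Suc (Suc 0)) (\<lambda>ys. \<Sum>y<Suc (ys ! 1). if prod_encode (ys ! 0, y) = ys ! 1 then ys ! 0 else 0)"
    by (rule cmp_cong[OF cmp_sum[OF inner, of "\<lambda>ys. Suc (ys ! 1)"]]) (auto intro: cmp_Suc cmp_proj cong: if_cong)
  have out: "cmp (Suc 0) (\<lambda>ys. \<Sum>x<Suc (ys ! 0). \<Sum>y<Suc (ys ! 0). if prod_encode (x, y) = ys ! 0 then x else 0)"
    by (rule cmp_cong[OF cmp_sum[OF mid, of "\<lambda>ys. Suc (ys ! 0)"]]) (auto intro: cmp_Suc cmp_proj cong: if_cong)
  then have "cmp (Suc 0) (\<lambda>ys. fst (prod_decode (ys ! 0)))" by (rule cmp_cong) (simp only: pd_sum_fst)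
  then have "cmp 1 (\<lambda>ys. fst (prod_decode (ys ! 0)))" by simp
  then show ?thesis by (rule cmp_comp1'[OF _ assms, of _ "\<lambda>m. fst (prod_decode m)"]) simp
qed

lemma cmp_snd_pd: assumes "cmp k f" shows "cmp k (\<lambda>xs. snd (prod_decode (f xs)))"
proof -
  have inner: "cmp (Suc (Suc (Suc 0))) (\<lambda>zs. if prod_encode (zs ! 1, zs ! 0) = zs ! 2 then zs ! 0 else 0)"
    by (intro cmp_if_eq cmp_pe cmp_proj cmp_const) auto
  have mid: "cmp (Suc (Suc 0)) (\<lambda>ys. \<Sum>y<Suc (ys ! 1). if prod_encode (ys ! 0, y) = ys ! 1 then y else 0)"
    by (rule cmp_cong[OF cmp_sum[OF inner, of "\<lambda>ys. Suc (ys ! 1)"]]) (auto intro: cmp_Suc cmp_proj cong: if_cong)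
  have out: "cmp (Suc 0) (\<lambda>ys. \<Sum>x<Suc (ys ! 0). \<Sum>y<Suc (ys ! 0). if prod_encode (x, y) = ys ! 0 then y else 0)"
    by (rule cmp_cong[OF cmp_sum[OF mid, of "\<lambda>ys. Suc (ys ! 0)"]]) (auto intro: cmp_Suc cmp_proj cong: if_cong)
  then have "cmp (Suc 0) (\<lambda>ys. snd (prod_decode (ys ! 0)))" by (rule cmp_cong) (simp only: pd_sum_snd)
  then have "cmp 1 (\<lambda>ys. snd (prod_decode (ys ! 0)))" by simp
  then show ?thesis by (rule cmp_comp1'[OF _ assms, of _ "\<lambda>m. snd (prod_decode m)"]) simp
qed

lemma cmp_lift1: "cmp 1 (\<lambda>ys. F (ys ! 0)) \<Longrightarrow> cmp k f \<Longrightarrow> cmp k (\<lambda>xs. F (f xs))"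
  by (rule cmp_comp1'[of _ _ _ F]) auto

lemma cmp_lift2: "cmp 2 (\<lambda>ys. F (ys ! 0) (ys ! 1)) \<Longrightarrow> cmp k f \<Longrightarrow> cmp k g \<Longrightarrow> cmp k (\<lambda>xs. F (f xs) (g xs))"
  by (rule cmp_comp2'[of _ _ _ _ F]) auto

section \<open>Functions on codes of lists\<close>

definition tlC :: "nat \<Rightarrow> nat" where "tlC c = snd (prod_decode (c - 1))"
definition hdC :: "nat \<Rightarrow> nat" where "hdC c = fst (prod_decode (c - 1))"
definition ItC :: "nat \<Rightarrow> nat \<Rightarrow> nat" where "ItC k c = (tlC ^^ k) c"
definition lenC :: "nat \<Rightarrow> nat" where "lenC c = (\<Sum>k<c. if ItC k c = 0 then 0 else 1)"
definition agC :: "(nat \<Rightarrow> nat) \<Rightarrow> nat \<Rightarrow> nat \<Rightarrow> nat" where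
  "agC w i c = (if ItC i c = 0 then 0 else if hdC (ItC i c) = w i then 1 else 0)"
definition jC :: "(nat \<Rightarrow> nat) \<Rightarrow> nat \<Rightarrow> nat" where
  "jC w c = (\<Sum>k<c. if (\<Sum>i<Suc k. agC w i c) = Suc k then 1 else 0)"

lemma cmp_tlC: "cmp 1 (\<lambda>ys. tlC (ys ! 0))"
  unfolding tlC_def by (intro cmp_snd_pd cmp_sub cmp_proj cmp_const) simp

lemma cmp_hdC: "cmp 1 (\<lambda>ys. hdC (ys ! 0))"
  unfolding hdC_def by (intro cmp_fst_pd cmp_sub cmp_proj cmp_const) simp

lemma cmp_ItC: "cmp 2 (\<lambda>ys. ItC (ys ! 0) (ys ! 1))"
  unfolding ItC_def by (intro cmp_iter[OF cmp_tlC] cmp_proj) auto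

lemma cmp_lenC: "cmp 1 (\<lambda>ys. lenC (ys ! 0))"
proof -
  have g: "cmp (Suc 1) (\<lambda>zs. if ItC (zs ! 0) (zs ! 1) = 0 then 0 else 1)"
    by (intro cmp_if_eq cmp_lift2[OF cmp_ItC] cmp_proj cmp_const) auto
  show ?thesis
    by (rule cmp_cong[OF cmp_sum[OF g cmp_proj[of 0 1]]]) (auto simp: lenC_def)
qed

lemma cmp_agC:
  assumes w: "cmp 1 (\<lambda>ys. w (ys ! 0))"
  shows "cmp 2 (\<lambda>ys. agC w (ys ! 0) (ys ! 1))"
  unfolding agC_def
  by (intro cmp_if_eq cmp_lift2[OF cmp_ItC] cmp_lift1[OF cmp_hdC] cmp_lift1[OF w] cmp_proj cmp_const) auto

lemma cmp_jC:
  assumes w: "cmp 1 (\<lambda>ys. w (ys ! 0))"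
  shows "cmp 1 (\<lambda>ys. jC w (ys ! 0))"
proof -
  have a3: "cmp (Suc (Suc (Suc 0))) (\<lambda>zs. agC w (zs ! 0) (zs ! 2))"
    by (intro cmp_lift2[OF cmp_agC[OF w]] cmp_proj) auto
  have inner: "cmp (Suc (Suc 0)) (\<lambda>ys. \<Sum>i<Suc (ys ! 0). agC w i (ys ! 1))"
    by (rule cmp_cong[OF cmp_sum[OF a3, of "\<lambda>ys. Suc (ys ! 0)"]]) (auto intro: cmp_Suc cmp_proj)
  have g: "cmp (Suc (Suc 0)) (\<lambda>ys. if (\<Sum>i<Suc (ys ! 0). agC w i (ys ! 1)) = Suc (ys ! 0) then 1 else 0)"
    by (intro cmp_if_eq inner cmp_Suc cmp_proj cmp_const) auto
  have "cmp (Suc 0) (\<lambda>ys. jC w (ys ! 0))"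
    by (rule cmp_cong[OF cmp_sum[OF g cmp_proj[of 0 "Suc 0"]]]) (auto simp: jC_def cong: if_cong)
  then show ?thesis by simp
qed

lemma tlC_enc: "tlC (list_encode (x # l)) = list_encode l"
  by (simp add: tlC_def)

lemma hdC_enc: "hdC (list_encode (x # l)) = x"
  by (simp add: hdC_def)

lemma pd0: "prod_decode 0 = (0, 0)"
  using prod_encode_inverse[of "(0, 0)"] by (simp add: prod_encode_def)

lemma tlC_0: "tlC 0 = 0"
  by (simp add: tlC_def pd0)

lemma ItC_enc: "ItC k (list_encode l) = list_encode (drop k l)"
proof (induction k)
  case 0
  then show ?case by (simp add: ItC_def)
next
  case (Suc k)
  have "ItC (Suc k) (list_encode l) = tlC (ItC k (list_encode l))" by (simp add: ItC_def)
  also have "\<dots> = list_encode (drop (Suc k) l)"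
    using Suc by (cases "drop k l") (auto simp: tlC_0 tlC_def pd0 drop_Suc drop_tl tl_drop[symmetric] dest: arg_cong[where f = tl])
  finally show ?case .
qed

lemma list_encode_0_iff: "list_encode l = 0 \<longleftrightarrow> l = []"
  by (cases l) auto

lemma length_le_list_encode: "length l \<le> list_encode l"
proof (induction l)
  case (Cons x l)
  then show ?case using le_prod_encode_2[of "list_encode l" x] by simp
qed simp

lemma lenC_enc: "lenC (list_encode l) = length l"
proof -
  have "lenC (list_encode l) = (\<Sum>k<list_encode l. if k < length l then 1 else 0)"
    unfolding lenC_def by (rule sum.cong) (auto simp: ItC_enc list_encode_0_iff)
  also have "\<dots> = card {k. k < list_encode l \<and> k < length l}"
    by (simp add: sum.If_cases Int_def)
  also have "{k. k < list_encode l \<and> k < length l} = {..<length l}"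
    using length_le_list_encode[of l] by auto
  finally show ?thesis by simp
qed

lemma hdC_drop: "k < length l \<Longrightarrow> hdC (list_encode (drop k l)) = l ! k"
  by (simp add: Cons_nth_drop_Suc[symmetric] hdC_def)

lemma sum01_eq:
  assumes "\<And>i. i < n \<Longrightarrow> f i \<le> (1::nat)"
  shows "(\<Sum>i<n. f i) = n \<longleftrightarrow> (\<forall>i<n. f i = 1)"
  using assms
proof (induction n)
  case (Suc n)
  have le: "(\<Sum>i<n. f i) \<le> n"
    using sum_mono[of "{..<n}" f "\<lambda>_. 1"] Suc.prems by simp
  have fn: "f n \<le> 1" using Suc.prems by simp
  have IH: "(\<Sum>i<n. f i) = n \<longleftrightarrow> (\<forall>i<n. f i = 1)" using Suc by simp
  have "(\<Sum>i<Suc n. f i) = Suc n \<longleftrightarrow> (\<Sum>i<n. f i) = n \<and> f n = 1"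
    using fn le by auto
  also have "\<dots> \<longleftrightarrow> (\<forall>i<Suc n. f i = 1)" using IH by (auto simp: less_Suc_eq)
  finally show ?case .
qed simp

lemma recursive_nat_cmp: "cmp 1 (\<lambda>ys. f (ys ! 0)) \<Longrightarrow> recursive_nat f"
  unfolding cmp_def recursive_nat_def
  by (metis length_Cons list.size(3) nth_Cons_0 One_nat_def)

lemma cmp_recursive_nat: "recursive_nat f \<Longrightarrow> cmp 1 (\<lambda>ys. f (ys ! 0))"
  unfolding cmp_def recursive_nat_def
proof clarify
  fix p assume p: "\<forall>n. rf_eval p [n] (f n)"
  show "\<exists>p. \<forall>xs. length xs = 1 \<longrightarrow> rf_eval p xs (f (xs ! 0))"
  proof (intro exI allI impI)
    fix xs :: "nat list" assume "length xs = 1"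
    then have "xs = [xs ! 0]" by (cases xs) auto
    then show "rf_eval p xs (f (xs ! 0))" using p by metis
  qed
qed

lemma path_cmp:
  assumes "recursive_path \<omega>"
  shows "cmp 1 (\<lambda>ys. enc_bool (\<omega> (ys ! 0)))"
proof -
  obtain g where g: "recursive_nat g" "\<forall>x. g x = enc_bool (\<omega> x)"
    using assms unfolding recursive_path_def recursive_map_def by auto
  have "g = (\<lambda>x. enc_bool (\<omega> x))" using g(2) by auto
  then show ?thesis using cmp_recursive_nat[OF g(1)] by simp
qed

lemma enc_sit_enc: "enc_sit s = list_encode (map enc_bool s)"
  by (simp add: enc_sit_def)

lemma lenC_sit: "lenC (enc_sit s) = length s"
  by (simp add: enc_sit_def lenC_enc)

lemma length_prefix[simp]: "length (prefix \<omega> n) = n"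
  by (simp add: prefix_def)

lemma enc_bool_inj[simp]: "enc_bool x = enc_bool y \<longleftrightarrow> x = y"
  by (simp add: enc_bool_def)

section \<open>Selection part\<close>

lemma count_to_inf:
  assumes "infinite {k. P k}"
  shows "filterlim (\<lambda>n. \<Sum>k<n. enc_bool (P k)) at_top sequentially"
  unfolding filterlim_at_top
proof
  fix Z :: nat
  obtain A where A: "A \<subseteq> {k. P k}" "finite A" "card A = Z"
    using infinite_arbitrarily_large[OF assms] by blast
  have "\<forall>n\<ge>Suc (Max (insert 0 A)). Z \<le> (\<Sum>k<n. enc_bool (P k))"
  proof (intro allI impI)
    fix n assume n: "Suc (Max (insert 0 A)) \<le> n"
    have sub: "A \<subseteq> {k\<in>{..<n}. P k}"
    proof
      fix x assume "x \<in> A"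
      then have "x \<le> Max (insert 0 A)" using A(2) by simp
      then show "x \<in> {k\<in>{..<n}. P k}" using n A(1) \<open>x \<in> A\<close> by auto
    qed
    have "(\<Sum>k<n. enc_bool (P k)) = card {k\<in>{..<n}. P k}"
      by (simp add: enc_bool_def sum.If_cases) (rule arg_cong[where f=card], auto)
    moreover have "card A \<le> card {k\<in>{..<n}. P k}" using sub by (intro card_mono) auto
    ultimately show "Z \<le> (\<Sum>k<n. enc_bool (P k))" using A(3) by simp
  qed
  then show "eventually (\<lambda>n. Z \<le> (\<Sum>k<n. enc_bool (P k))) sequentially"
    unfolding eventually_sequentially by blast
qed

lemma sel_part:
  assumes rp: "recursive_path \<omega>" and SS: "recursive_temporal_sel \<subseteq> SS"
    and ab: "0 < a" "a \<le> b" "b < 1"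
  shows "\<not> sel_random SS (\<lambda>s. {a..b}) \<omega>"
proof
  assume R: "sel_random SS (\<lambda>s. {a..b}) \<omega>"
  have w: "cmp 1 (\<lambda>ys. enc_bool (\<omega> (ys ! 0)))" by (rule path_cmp[OF rp])
  have cL: "cmp 1 (\<lambda>ys. lenC (ys ! 0))" by (rule cmp_lenC)
  have Inf: "Inf {a..b} = a" and Sup: "Sup {a..b} = b" using ab by auto
  have "infinite {k. \<omega> k} \<or> infinite {k. \<not> \<omega> k}"
  proof (rule ccontr)
    assume "\<not> ?thesis"
    then have "finite ({k. \<omega> k} \<union> {k. \<not> \<omega> k})" by auto
    moreover have "{k. \<omega> k} \<union> {k. \<not> \<omega> k} = UNIV" by auto
    ultimately show False by simp
  qed
  then show False
  proof
    assume inf: "infinite {k. \<omega> k}"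
    define S where "S = (\<lambda>s::bool list. \<omega> (length s))"
    have "S \<in> recursive_temporal_sel"
      unfolding recursive_temporal_sel_def temporal_def recursive_map_def
    proof (intro CollectI conjI allI impI exI)
      show "length s = length t \<Longrightarrow> S s = S t" for s t :: "bool list" by (simp add: S_def)
      show "recursive_nat (\<lambda>c. enc_bool (\<omega> (lenC c)))"
        by (rule recursive_nat_cmp, rule cmp_lift1[OF w cL])
      show "enc_bool (\<omega> (lenC (enc_sit x))) = enc_bool (S x)" for x by (simp add: S_def lenC_sit)
    qed
    then have inS: "S \<in> SS" using SS by auto
    have cnt: "sel_count S \<omega> = (\<lambda>n. \<Sum>k<n. enc_bool (\<omega> k))"
      by (simp add: sel_count_def S_def fun_eq_iff)
    have lim: "filterlim (sel_count S \<omega>) at_top sequentially"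
      unfolding cnt by (rule count_to_inf[OF inf])
    have "limsup (\<lambda>n. ereal ((\<Sum>k<n. real (enc_bool (S (prefix \<omega> k)))
            * (real (enc_bool (\<omega> k)) - Sup {a..b})) / real (sel_count S \<omega> n))) \<le> 0"
      using R inS lim unfolding sel_random_def by auto
    moreover have "ereal (1 - b) \<le> limsup (\<lambda>n. ereal ((\<Sum>k<n. real (enc_bool (S (prefix \<omega> k)))
            * (real (enc_bool (\<omega> k)) - Sup {a..b})) / real (sel_count S \<omega> n)))"
    proof (rule le_Limsup)
      have ev: "eventually (\<lambda>n. 1 \<le> sel_count S \<omega> n) sequentially"
        using lim unfolding filterlim_at_top by auto
      show "eventually (\<lambda>n. ereal (1 - b) \<le> ereal ((\<Sum>k<n. real (enc_bool (S (prefix \<omega> k)))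
            * (real (enc_bool (\<omega> k)) - Sup {a..b})) / real (sel_count S \<omega> n))) sequentially"
        using ev
      proof eventually_elim
        case (elim n)
        have "(\<Sum>k<n. real (enc_bool (S (prefix \<omega> k))) * (real (enc_bool (\<omega> k)) - Sup {a..b}))
            = (\<Sum>k<n. (1 - b) * real (enc_bool (\<omega> k)))"
          by (rule sum.cong) (auto simp: S_def Sup enc_bool_def)
        also have "\<dots> = (1 - b) * real (sel_count S \<omega> n)"
          by (simp add: cnt sum_distrib_left)
        finally show ?case using elim by simp
      qed
    qed simp
    ultimately have "ereal (1 - b) \<le> 0" by (rule order_trans[rotated])
    then show False using ab by simp
  next
    assume inf: "infinite {k. \<not> \<omega> k}"
    define S where "S = (\<lambda>s::bool list. \<not> \<omega> (length s))"
    have "S \<in> recursive_temporal_sel"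
      unfolding recursive_temporal_sel_def temporal_def recursive_map_def
    proof (intro CollectI conjI allI impI exI)
      show "length s = length t \<Longrightarrow> S s = S t" for s t :: "bool list" by (simp add: S_def)
      show "recursive_nat (\<lambda>c. 1 - enc_bool (\<omega> (lenC c)))"
        by (rule recursive_nat_cmp, intro cmp_sub cmp_const cmp_lift1[OF w cL])
      show "1 - enc_bool (\<omega> (lenC (enc_sit x))) = enc_bool (S x)" for x by (simp add: S_def lenC_sit enc_bool_def)
    qed
    then have inS: "S \<in> SS" using SS by auto
    have cnt: "sel_count S \<omega> = (\<lambda>n. \<Sum>k<n. enc_bool (\<not> \<omega> k))"
      by (simp add: sel_count_def S_def fun_eq_iff)
    have lim: "filterlim (sel_count S \<omega>) at_top sequentially"
      unfolding cnt by (rule count_to_inf[OF inf])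
    have "liminf (\<lambda>n. ereal ((\<Sum>k<n. real (enc_bool (S (prefix \<omega> k)))
            * (real (enc_bool (\<omega> k)) - Inf {a..b})) / real (sel_count S \<omega> n))) \<ge> 0"
      using R inS lim unfolding sel_random_def by auto
    moreover have "liminf (\<lambda>n. ereal ((\<Sum>k<n. real (enc_bool (S (prefix \<omega> k)))
            * (real (enc_bool (\<omega> k)) - Inf {a..b})) / real (sel_count S \<omega> n))) \<le> ereal (- a)"
    proof (rule Liminf_le)
      have ev: "eventually (\<lambda>n. 1 \<le> sel_count S \<omega> n) sequentially"
        using lim unfolding filterlim_at_top by auto
      show "eventually (\<lambda>n. ereal ((\<Sum>k<n. real (enc_bool (S (prefix \<omega> k)))
            * (real (enc_bool (\<omega> k)) - Inf {a..b})) / real (sel_count S \<omega> n)) \<le> ereal (- a)) sequentially"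
        using ev
      proof eventually_elim
        case (elim n)
        have "(\<Sum>k<n. real (enc_bool (S (prefix \<omega> k))) * (real (enc_bool (\<omega> k)) - Inf {a..b}))
            = (\<Sum>k<n. (- a) * real (enc_bool (\<not> \<omega> k)))"
          by (rule sum.cong) (auto simp: S_def Inf enc_bool_def)
        also have "\<dots> = (- a) * real (sel_count S \<omega> n)"
          by (simp add: cnt sum_distrib_left)
        finally show ?case using elim by simp
      qed
    qed simp
    ultimately have "0 \<le> ereal (- a)" by (rule order_trans)
    then show False using ab by simp
  qed
qed

section \<open>Martingale part\<close>

definition onpath :: "(nat \<Rightarrow> bool) \<Rightarrow> bool list \<Rightarrow> bool" where
  "onpath \<omega> s \<longleftrightarrow> (\<forall>i<length s. s ! i = \<omega> i)"

definition agreeN :: "(nat \<Rightarrow> bool) \<Rightarrow> bool list \<Rightarrow> nat" where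
  "agreeN \<omega> s = (\<Sum>k<length s. if \<forall>i\<le>k. s ! i = \<omega> i then 1 else 0)"

definition Dm :: "(nat \<Rightarrow> bool) \<Rightarrow> real \<Rightarrow> bool list \<Rightarrow> bool \<Rightarrow> real" where
  "Dm \<omega> c s x = (if onpath \<omega> s then (if x = \<omega> (length s) then c else 1/2) else 1)"

lemma generated_Nil[simp]: "generated D [] = 1"
  by (simp add: generated_def)

lemma generated_snoc: "generated D (s @ [x]) = generated D s * D s x"
proof -
  have "generated D (s @ [x]) = (\<Prod>k<Suc (length s). D (take k (s @ [x])) ((s @ [x]) ! k))"
    by (simp add: generated_def)
  also have "\<dots> = (\<Prod>k<length s. D (take k s) (s ! k)) * D s x"
    by (simp add: nth_append)
  finally show ?thesis by (simp add: generated_def)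
qed

lemma onpath_snoc: "onpath \<omega> (s @ [x]) \<longleftrightarrow> onpath \<omega> s \<and> x = \<omega> (length s)"
  by (auto simp: onpath_def nth_append less_Suc_eq)

lemma agreeN_snoc: "agreeN \<omega> (s @ [x]) = agreeN \<omega> s + (if onpath \<omega> s \<and> x = \<omega> (length s) then 1 else 0)"
proof -
  have "agreeN \<omega> (s @ [x]) = (\<Sum>k<length s. if \<forall>i\<le>k. (s @ [x]) ! i = \<omega> i then 1 else 0)
      + (if \<forall>i\<le>length s. (s @ [x]) ! i = \<omega> i then 1 else 0)"
    by (simp add: agreeN_def)
  also have "(\<Sum>k<length s. if \<forall>i\<le>k. (s @ [x]) ! i = \<omega> i then 1 else 0) = agreeN \<omega> s"
    unfolding agreeN_def by (rule sum.cong) (auto simp: nth_append)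
  also have "(\<forall>i\<le>length s. (s @ [x]) ! i = \<omega> i) \<longleftrightarrow> onpath \<omega> s \<and> x = \<omega> (length s)"
    by (auto simp: onpath_def nth_append le_less)
  finally show ?thesis .
qed

lemma gen_closed: "generated (Dm \<omega> c) s = c ^ agreeN \<omega> s * (if onpath \<omega> s then 1 else 1/2)"
proof (induction s rule: rev_induct)
  case Nil
  then show ?case by (simp add: agreeN_def onpath_def)
next
  case (snoc x s)
  then show ?case
    by (simp add: generated_snoc agreeN_snoc onpath_snoc Dm_def)
qed

lemma onpath_prefix: "onpath \<omega> (prefix \<omega> n)"
  by (simp add: onpath_def prefix_def)

lemma agreeN_prefix: "agreeN \<omega> (prefix \<omega> n) = n"
  by (simp add: agreeN_def prefix_def)

lemma agreeN_le: "agreeN \<omega> s \<le> length s"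
  unfolding agreeN_def using sum_mono[of "{..<length s}" "\<lambda>k. if \<forall>i\<le>k. s ! i = \<omega> i then 1 else (0::nat)" "\<lambda>_. 1"]
  by simp

lemma agreeN_eq_iff: "agreeN \<omega> s = length s \<longleftrightarrow> onpath \<omega> s"
proof -
  have "agreeN \<omega> s = length s \<longleftrightarrow> (\<forall>k<length s. (if \<forall>i\<le>k. s ! i = \<omega> i then 1 else 0) = (1::nat))"
    unfolding agreeN_def by (rule sum01_eq) simp
  also have "\<dots> \<longleftrightarrow> onpath \<omega> s"
    by (auto simp: onpath_def)
  finally show ?thesis .
qed

lemma agC_sit:
  "agC (\<lambda>i. enc_bool (\<omega> i)) i (enc_sit s) = (if i < length s \<and> s ! i = \<omega> i then 1 else 0)"
  by (auto simp: agC_def enc_sit_def ItC_enc list_encode_0_iff hdC_drop)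

lemma jC_sit: "jC (\<lambda>i. enc_bool (\<omega> i)) (enc_sit s) = agreeN \<omega> s"
proof -
  let ?w = "\<lambda>i. enc_bool (\<omega> i)"
  have A: "(\<Sum>i<Suc k. agC ?w i (enc_sit s)) = Suc k \<longleftrightarrow> k < length s \<and> (\<forall>i\<le>k. s ! i = \<omega> i)" for k
  proof -
    have "(\<Sum>i<Suc k. agC ?w i (enc_sit s)) = Suc k \<longleftrightarrow> (\<forall>i<Suc k. agC ?w i (enc_sit s) = 1)"
      by (rule sum01_eq) (simp add: agC_sit)
    also have "\<dots> \<longleftrightarrow> k < length s \<and> (\<forall>i\<le>k. s ! i = \<omega> i)"
      by (auto simp: agC_sit less_Suc_eq_le)
    finally show ?thesis .
  qed
  have "jC ?w (enc_sit s) = (\<Sum>k<enc_sit s. if k < length s \<and> (\<forall>i\<le>k. s ! i = \<omega> i) then 1 else 0)"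
    unfolding jC_def by (rule sum.cong) (simp_all only: A)
  also have "\<dots> = (\<Sum>k<length s. if (\<forall>i\<le>k. s ! i = \<omega> i) then 1 else 0)"
  proof -
    have le: "length s \<le> enc_sit s" using length_le_list_encode[of "map enc_bool s"] by (simp add: enc_sit_def)
    have "(\<Sum>k<enc_sit s. if k < length s \<and> (\<forall>i\<le>k. s ! i = \<omega> i) then 1 else (0::nat))
        = (\<Sum>k<length s. if k < length s \<and> (\<forall>i\<le>k. s ! i = \<omega> i) then 1 else 0)"
      using le by (intro sum.mono_neutral_right) auto
    then show ?thesis by simp
  qed
  finally show ?thesis by (simp add: agreeN_def)
qed

lemma quot_coprime:
  assumes "coprime p q" "q > 0"
  shows "quotient_of (of_int p / of_int q) = (p, q)"
proof -
  have "quotient_of (of_int p / of_int q) = Rat.normalize (p, q)"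
    by (simp add: Fract_of_int_quotient[symmetric] quotient_of_Fract)
  also have "\<dots> = (p, q)" using assms by (simp add: Rat.normalize_def)
  finally show ?thesis .
qed

lemma int_encode_nat: "int_encode (int m) = 2 * m"
  by (simp add: int_encode_def sum_encode_def)

lemma mix_ineq:
  fixes t mu c :: real
  assumes "0 \<le> t" "t \<le> mu" "mu * c + (1 - mu) / 2 \<le> 1" "1/2 \<le> c"
  shows "t * c + (1 - t) / 2 \<le> 1"
proof -
  have "t * (c - 1/2) \<le> mu * (c - 1/2)" using assms by (intro mult_right_mono) auto
  moreover have "t * c + (1 - t) / 2 = 1/2 + t * (c - 1/2)" by (simp add: field_simps)
  moreover have "mu * c + (1 - mu) / 2 = 1/2 + mu * (c - 1/2)" by (simp add: field_simps)
  ultimately show ?thesis using assms(3) by linarith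
qed

lemma pow_grow: "(c::real) > 1 \<Longrightarrow> filterlim (\<lambda>n. c ^ n - real n) at_top sequentially"
  by real_asymp

lemma limsup_inf:
  fixes f :: "nat \<Rightarrow> real"
  assumes "filterlim f at_top sequentially"
  shows "limsup (\<lambda>n. ereal (f n)) = \<infinity>"
proof -
  have "ereal M \<le> limsup (\<lambda>n. ereal (f n))" for M
  proof (rule le_Limsup)
    show "eventually (\<lambda>n. ereal M \<le> ereal (f n)) sequentially"
      using assms unfolding filterlim_at_top by (auto elim: eventually_mono)
  qed simp
  then show ?thesis
  proof (cases "limsup (\<lambda>n. ereal (f n))")
    case (real r)
    then show ?thesis using \<open>\<And>M. ereal M \<le> limsup (\<lambda>n. ereal (f n))\<close>[of "r + 1"] by simp
  next
    case MInf
    then show ?thesis using \<open>\<And>M. ereal M \<le> limsup (\<lambda>n. ereal (f n))\<close>[of 0] by simp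
  qed simp
qed

lemma mart_part:
  assumes rp: "recursive_path \<omega>" and ab: "0 < a" "a \<le> b" "b < 1"
  shows "\<not> random_ML (\<lambda>s. {a..b}) \<omega> \<and> \<not> random_wML (\<lambda>s. {a..b}) \<omega>
    \<and> \<not> random_C (\<lambda>s. {a..b}) \<omega> \<and> \<not> random_S (\<lambda>s. {a..b}) \<omega>"
proof -
  define mu where "mu = max b (1 - a)"
  have mu: "mu < 1" "b \<le> mu" "1 - a \<le> mu" "0 \<le> mu" using ab by (auto simp: mu_def)
  obtain M :: nat where M: "2 / (1 - mu) < real M" using reals_Archimedean2 by blast
  have M2: "2 < real M * (1 - mu)" using M mu by (simp add: pos_divide_less_eq)
  define N where "N = 2 * M"
  have Mpos: "M > 0" using M2 mu by (cases M) auto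
  have Npos: "N > 0" and evN: "even N" using Mpos by (auto simp: N_def)
  have keyN: "2 * mu \<le> real N * (1 - mu)" using M2 mu by (simp add: N_def)
  define c where "c = real (N + 1) / real N"
  have c_eq: "c = 1 + 1 / real N" using Npos by (simp add: c_def field_simps)
  have c1: "c > 1" using Npos by (simp add: c_eq)
  have c_half: "1/2 \<le> c" using c1 by simp
  have cmu: "mu * c + (1 - mu) / 2 \<le> 1"
  proof -
    have "mu / real N = (2 * mu) / (2 * real N)" by simp
    also have "\<dots> \<le> (real N * (1 - mu)) / (2 * real N)" using keyN Npos by (intro divide_right_mono) auto
    also have "\<dots> = (1 - mu) / 2" using Npos by simp
    finally have h: "mu / real N \<le> (1 - mu) / 2" .
    have "mu * c = mu + mu / real N" by (simp add: c_eq algebra_simps)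
    then show ?thesis using h by argo
  qed
  define D where "D = Dm \<omega> c"
  define T where "T = generated D"
  have T_closed: "T s = c ^ agreeN \<omega> s * (if onpath \<omega> s then 1 else 1/2)" for s
    by (simp add: T_def D_def gen_closed)
  have Tpos: "T s > 0" for s using c1 by (simp add: T_closed)
  have tp: "test_process T" using Tpos by (auto simp: test_process_def T_def less_imp_le)
  have sm: "supermartingale (\<lambda>s. {a..b}) T"
    unfolding supermartingale_def upper_ev_def
  proof
    fix s
    show "Sup ((\<lambda>r. ev r (\<lambda>x. T (s @ [x]) - T s)) ` {a..b}) \<le> 0"
    proof (rule cSup_least)
      show "(\<lambda>r. ev r (\<lambda>x. T (s @ [x]) - T s)) ` {a..b} \<noteq> {}" using ab by auto
    next
      fix y assume "y \<in> (\<lambda>r. ev r (\<lambda>x. T (s @ [x]) - T s)) ` {a..b}"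
      then obtain r where r: "a \<le> r" "r \<le> b" and y: "y = ev r (\<lambda>x. T (s @ [x]) - T s)" by auto
      have ev_eq: "y = T s * (r * D s True + (1 - r) * D s False - 1)"
        by (simp add: y ev_def T_def generated_snoc algebra_simps)
      have le1: "r * D s True + (1 - r) * D s False \<le> 1"
      proof (cases "onpath \<omega> s")
        case True
        show ?thesis
        proof (cases "\<omega> (length s)")
          case True
          then have "r * D s True + (1 - r) * D s False = r * c + (1 - r) / 2"
            using \<open>onpath \<omega> s\<close> by (simp add: D_def Dm_def)
          also have "\<dots> \<le> 1" using mix_ineq[of r mu c] r ab mu cmu c_half by auto
          finally show ?thesis .
        next
          case False
          then have "r * D s True + (1 - r) * D s False = (1 - r) * c + (1 - (1 - r)) / 2"
            using \<open>onpath \<omega> s\<close> by (simp add: D_def Dm_def algebra_simps)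
          also have "\<dots> \<le> 1" using mix_ineq[of "1 - r" mu c] r ab mu cmu c_half by auto
          finally show ?thesis .
        qed
      next
        case False
        then show ?thesis by (simp add: D_def Dm_def)
      qed
      show "y \<le> 0" unfolding ev_eq using Tpos[of s] le1
        by (intro mult_nonneg_nonpos) auto
    qed
  qed
  have Tpref: "T (prefix \<omega> n) = c ^ n" for n
    by (simp add: T_closed agreeN_prefix onpath_prefix)
  have grow: "filterlim (\<lambda>n. c ^ n - real n) at_top sequentially" by (rule pow_grow[OF c1])
  have grow2: "filterlim (\<lambda>n. c ^ n) at_top sequentially"
    by (rule filterlim_at_top_mono[OF grow]) auto
  have limT: "limsup (\<lambda>n. ereal (T (prefix \<omega> n))) = \<infinity>"
    unfolding Tpref by (rule limsup_inf[OF grow2])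

  let ?w = "\<lambda>i. enc_bool (\<omega> i)"
  have wc: "cmp 1 (\<lambda>ys. ?w (ys ! 0))" by (rule path_cmp[OF rp])
  define fR :: "bool list \<Rightarrow> rat" where
    "fR s = of_nat ((N + 1) ^ agreeN \<omega> s) / of_nat (N ^ agreeN \<omega> s * (if onpath \<omega> s then 1 else 2))" for s
  have T_fR: "T s = of_rat (fR s)" for s
  proof -
    show ?thesis
      by (auto simp: T_closed fR_def of_rat_divide of_rat_power of_rat_mult of_rat_add c_def power_divide)
  qed
  have fR_pos: "fR s > 0" for s using Npos by (simp add: fR_def)
  define gC where "gC cc = prod_encode (2 * (N + 1) ^ jC ?w cc, 2 * (N ^ jC ?w cc * (if jC ?w cc = lenC cc then 1 else 2)))" for cc
  have gC_cmp: "cmp 1 (\<lambda>ys. gC (ys ! 0))"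
    unfolding gC_def
    by (intro cmp_pe cmp_mult cmp_const cmp_pow cmp_if_eq cmp_lift1[OF cmp_jC[OF wc]] cmp_lift1[OF cmp_lenC] cmp_proj) auto
  have gC_enc: "gC (enc_sit s) = enc_rat (fR s)" for s
  proof -
    define j where "j = agreeN \<omega> s"
    define E :: nat where "E = (if onpath \<omega> s then 1 else 2)"
    have cop: "coprime ((N + 1) ^ j) (N ^ j * E)"
    proof -
      have "coprime (N + 1) N" using coprime_Suc_left_nat[of N] by simp
      moreover have "coprime (N + 1) 2" using evN by (simp add: coprime_commute[of _ 2])
      ultimately show ?thesis by (auto simp: E_def coprime_power_left_iff coprime_mult_right_iff)
    qed
    have pos: "N ^ j * E > 0" using Npos by (simp add: E_def)
    define A where "A = (N + 1) ^ j"
    define B where "B = N ^ j * E"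
    have copI: "coprime (int A) (int B)" using cop by (simp only: coprime_int_iff A_def B_def)
    have posI: "int B > 0" using pos by (simp add: B_def)
    have fRAB: "fR s = of_int (int A) / of_int (int B)"
      by (simp add: fR_def j_def E_def A_def B_def)
    have q: "quotient_of (fR s) = (int A, int B)"
      unfolding fRAB by (rule quot_coprime[OF copI posI])
    have "gC (enc_sit s) = prod_encode (2 * A, 2 * B)"
      by (simp add: gC_def jC_sit lenC_sit j_def E_def agreeN_eq_iff A_def B_def)
    also have "\<dots> = enc_rat (fR s)"
      by (simp add: enc_rat_def q int_encode_nat)
    finally show ?thesis .
  qed
  have T_C: "T \<in> F_C"
    unfolding F_C_def recursive_map_def
    using tp fR_pos T_fR recursive_nat_cmp[OF gC_cmp] gC_enc by blast
  have T_ML: "T \<in> F_ML"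
    unfolding F_ML_def lower_semicomputable_sit_def recursive_map_def
  proof (intro CollectI conjI exI allI)
    show "test_process T" by (rule tp)
    show "recursive_nat (\<lambda>m. gC (fst (prod_decode m)))"
      by (rule recursive_nat_cmp, intro cmp_lift1[OF gC_cmp] cmp_fst_pd cmp_proj) simp
    show "gC (fst (prod_decode (enc_sit_nat x))) = enc_rat (case x of (s, n) \<Rightarrow> fR s)" for x
      by (cases x) (simp add: enc_sit_nat_def gC_enc)
    show "fR s \<le> fR s" for s :: "bool list" by simp
    show "(\<lambda>n. real_of_rat (fR s)) \<longlonglongrightarrow> T s" for s by (simp add: T_fR)
  qed
  define dR :: "bool list \<Rightarrow> bool \<Rightarrow> rat" where
    "dR s x = (if onpath \<omega> s then (if x = \<omega> (length s) then of_nat (N + 1) / of_nat N else 1/2) else 1)" for s x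
  have D_dR: "D s x = of_rat (dR s x)" for s x
    by (simp add: D_def Dm_def dR_def c_def of_rat_divide of_rat_add)
  define gD where "gD m = (if jC ?w (fst (prod_decode (fst (prod_decode m)))) = lenC (fst (prod_decode (fst (prod_decode m))))
     then (if snd (prod_decode (fst (prod_decode m))) = ?w (lenC (fst (prod_decode (fst (prod_decode m)))))
       then enc_rat (of_nat (N + 1) / of_nat N) else enc_rat (1/2)) else enc_rat 1)" for m
  have gD_cmp: "cmp 1 (\<lambda>ys. gD (ys ! 0))"
    unfolding gD_def
    by (intro cmp_if_eq cmp_lift1[OF cmp_jC[OF wc]] cmp_lift1[OF cmp_lenC] cmp_lift1[OF wc] cmp_fst_pd cmp_snd_pd cmp_proj cmp_const) auto
  have gD_enc: "gD (enc_sit_bool_nat ((s, x), n)) = enc_rat (dR s x)" for s x n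
    by (simp add: gD_def dR_def enc_sit_bool_nat_def jC_sit lenC_sit agreeN_eq_iff)
  have T_wML: "T \<in> F_wML"
    unfolding F_wML_def
  proof (intro CollectI exI conjI allI)
    show "0 \<le> D s x" for s x by (simp add: D_def Dm_def less_imp_le[OF less_trans[OF zero_less_one c1]])
    show "T = generated D" by (simp add: T_def)
    show "lower_semicomputable_mult D"
      unfolding lower_semicomputable_mult_def
    proof (rule exI[of _ "\<lambda>s x n. dR s x"], intro conjI allI)
      show "recursive_map enc_sit_bool_nat enc_rat (\<lambda>((s, x), n). dR s x)"
        unfolding recursive_map_def
        by (intro exI[of _ gD] conjI allI recursive_nat_cmp[OF gD_cmp]) (auto simp: gD_enc split: prod.splits)
      show "dR s x \<le> dR s x" for s x by simp
      show "(\<lambda>n. real_of_rat (dR s x)) \<longlonglongrightarrow> D s x" for s x by (simp add: D_dR)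
    qed
  qed
  have TS_ML: "T \<in> test_supermartingales F_ML (\<lambda>s. {a..b})"
    using T_ML tp sm by (simp add: test_supermartingales_def)
  have TS_wML: "T \<in> test_supermartingales F_wML (\<lambda>s. {a..b})"
    using T_wML tp sm by (simp add: test_supermartingales_def)
  have TS_C: "T \<in> test_supermartingales F_C (\<lambda>s. {a..b})"
    using T_C tp sm by (simp add: test_supermartingales_def)
  have rg: "real_growth_function real"
    unfolding real_growth_function_def computable_real_fun_def
  proof (intro conjI allI)
    show "\<exists>q :: nat \<Rightarrow> nat \<Rightarrow> rat. recursive_map enc_nat_nat enc_rat (\<lambda>(d, n). q d n) \<and>
      (\<forall>d n. \<bar>real d - real_of_rat (q d n)\<bar> < 1 / 2 ^ n)"
    proof (rule exI[of _ "\<lambda>d n. of_nat d"], intro conjI allI)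
      have rn: "recursive_nat (\<lambda>m. prod_encode (2 * fst (prod_decode m), 2))"
        by (rule recursive_nat_cmp, intro cmp_pe cmp_mult cmp_const cmp_fst_pd cmp_proj) simp
      have "prod_encode (2 * fst (prod_decode (enc_nat_nat x)), 2) = enc_rat (case x of (d, n) \<Rightarrow> of_nat d)" for x
        by (cases x) (simp add: enc_nat_nat_def enc_rat_def quotient_of_rat_of_nat int_encode_nat int_encode_def sum_encode_def)
      then show "recursive_map enc_nat_nat enc_rat (\<lambda>(d, n). (of_nat d :: rat))"
        unfolding recursive_map_def using rn by blast
      show "\<bar>real d - real_of_rat (of_nat d)\<bar> < 1 / 2 ^ n" for d n by simp
    qed
    show "0 \<le> real n" for n by simp
    show "mono real" by (simp add: mono_def)
    show "\<exists>n. M' < real n" for M' using reals_Archimedean2 by blast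
  qed
  have limS: "0 \<le> limsup (\<lambda>n. ereal (T (prefix \<omega> n) - real n))"
  proof (rule le_Limsup)
    show "eventually (\<lambda>n. 0 \<le> ereal (T (prefix \<omega> n) - real n)) sequentially"
      using grow unfolding filterlim_at_top Tpref
      by (auto elim!: allE[where x = 0] elim: eventually_mono)
  qed simp
  show ?thesis
    unfolding random_ML_def random_wML_def random_C_def random_S_def mart_random_def F_S_def
    using TS_ML TS_wML TS_C limT rg limS by blast
qed

theorem proposition26:
  fixes \<omega> :: "nat \<Rightarrow> bool" and a b :: real
  assumes "0 < a" and "a \<le> b" and "b < 1"
  shows "(wCH_random (\<lambda>s. {a..b}) \<omega> \<longrightarrow> \<not> recursive_path \<omega>)
    \<and> (\<forall>SS :: (bool list \<Rightarrow> bool) set. countable SS \<and> recursive_temporal_sel \<subseteq> SS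
          \<and> sel_random SS (\<lambda>s. {a..b}) \<omega> \<longrightarrow> \<not> recursive_path \<omega>)
    \<and> (random_ML (\<lambda>s. {a..b}) \<omega> \<longrightarrow> \<not> recursive_path \<omega>)
    \<and> (random_wML (\<lambda>s. {a..b}) \<omega> \<longrightarrow> \<not> recursive_path \<omega>)
    \<and> (random_C (\<lambda>s. {a..b}) \<omega> \<longrightarrow> \<not> recursive_path \<omega>)
    \<and> (random_S (\<lambda>s. {a..b}) \<omega> \<longrightarrow> \<not> recursive_path \<omega>)"
  using sel_part[of \<omega> recursive_temporal_sel a b] sel_part[of \<omega> _ a b] mart_part[of \<omega> a b] assms
  unfolding wCH_random_def by blast

end
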